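(* Let $k\ge 2$ be an integer. There exists $\Delta_c(k)\ge 3$ such that for every integer $\Delta\ge 2$: the independent set model has uniqueness on $\mathbb{T}_{k,\Delta}$ whenever $\Delta<\Delta_c(k)$, and non-uniqueness whenever $\Delta>\Delta_c(k)$.
   Context: $\mathbb{T}_{k,\Delta}$ is the infinite $(\Delta-1)$-ary $k$-uniform hypertree with root $\rho$: recursively, each vertex has $\Delta-1$ descending hyperedges, each consisting of that vertex together with $k-1$ new vertices. For $n\ge 0$, $\mathbb{T}(n)$ is the sub-hypergraph induced by vertices at distance at most $n$ from $\rho$, and $L_n$ is the set of vertices at distance exactly $n$ from $\rho$. An independent set (vertex subset containing no hyperedge) is identified with $\sigma$, $\sigma(v)=1$ iff $v$ is in the set; $\mu_n$ is the uniform distribution on independent sets of $\mathbb{T}(n)$. The model has uniqueness on $\mathbb{T}_{k,\Delta}$ iff $\limsup_{n\to\infty}\max_{\eta,\eta':L_n\to\{0,1\}}|\mu_n(\sigma_\rho=1\mid\sigma_{L_n}=\eta)-\mu_n(\sigma_\rho=1\mid\sigma_{L_n}=\eta')|=0$, and non-uniqueness otherwise. *)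

theory Defs
  imports "HOL-Analysis.Analysis" "HOL-Library.Liminf_Limsup"
begin

text \<open>Vertices of the infinite (Delta-1)-ary k-uniform hypertree are encoded as lists
  of pairs (i,j): the vertex v @ [(i,j)] is the j-th new vertex (j < k-1) of the i-th
  descending hyperedge (i < Delta-1) of v.  The root is the empty list.  The hypergraph
  distance of a vertex from the root equals the length of its list.\<close>

definition tree_verts :: "nat \<Rightarrow> nat \<Rightarrow> (nat \<times> nat) list set" where
  "tree_verts k \<Delta> = {v. \<forall>(i,j)\<in>set v. i < \<Delta> - 1 \<and> j < k - 1}"

definition hedge :: "nat \<Rightarrow> (nat \<times> nat) list \<Rightarrow> nat \<Rightarrow> (nat \<times> nat) list set" where
  "hedge k v i = insert v {v @ [(i,j)] | j. j < k - 1}"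

definition tree_edges :: "nat \<Rightarrow> nat \<Rightarrow> (nat \<times> nat) list set set" where
  "tree_edges k \<Delta> = {hedge k v i | v i. v \<in> tree_verts k \<Delta> \<and> i < \<Delta> - 1}"

definition trunc_verts :: "nat \<Rightarrow> nat \<Rightarrow> nat \<Rightarrow> (nat \<times> nat) list set" where
  "trunc_verts k \<Delta> n = {v \<in> tree_verts k \<Delta>. length v \<le> n}"

definition trunc_edges :: "nat \<Rightarrow> nat \<Rightarrow> nat \<Rightarrow> (nat \<times> nat) list set set" where
  "trunc_edges k \<Delta> n = {e \<in> tree_edges k \<Delta>. e \<subseteq> trunc_verts k \<Delta> n}"

definition level :: "nat \<Rightarrow> nat \<Rightarrow> nat \<Rightarrow> (nat \<times> nat) list set" where
  "level k \<Delta> n = {v \<in> tree_verts k \<Delta>. length v = n}"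

text \<open>Independent sets of T(n) (identified with configurations sigma).\<close>
definition indep_sets :: "nat \<Rightarrow> nat \<Rightarrow> nat \<Rightarrow> (nat \<times> nat) list set set" where
  "indep_sets k \<Delta> n = {S. S \<subseteq> trunc_verts k \<Delta> n \<and> (\<forall>e\<in>trunc_edges k \<Delta> n. \<not> e \<subseteq> S)}"

text \<open>mu_n(sigma_rho = 1 | sigma_{L_n} = eta) for the uniform distribution on independent
  sets of T(n); a boundary condition eta : L_n \<rightarrow> {0,1} is identified with the subset
  of L_n where it equals 1.\<close>
definition root_prob :: "nat \<Rightarrow> nat \<Rightarrow> nat \<Rightarrow> (nat \<times> nat) list set \<Rightarrow> real" where
  "root_prob k \<Delta> n \<eta> =
     real (card {S \<in> indep_sets k \<Delta> n. [] \<in> S \<and> S \<inter> level k \<Delta> n = \<eta>}) /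
     real (card {S \<in> indep_sets k \<Delta> n. S \<inter> level k \<Delta> n = \<eta>})"

definition max_influence :: "nat \<Rightarrow> nat \<Rightarrow> nat \<Rightarrow> real" where
  "max_influence k \<Delta> n = Max {\<bar>root_prob k \<Delta> n \<eta> - root_prob k \<Delta> n \<eta>'\<bar> | \<eta> \<eta>'.
      \<eta> \<subseteq> level k \<Delta> n \<and> \<eta>' \<subseteq> level k \<Delta> n}"

definition uniqueness :: "nat \<Rightarrow> nat \<Rightarrow> bool" where
  "uniqueness k \<Delta> \<longleftrightarrow> limsup (\<lambda>n. ereal (max_influence k \<Delta> n)) = 0"

end

theory Submission
  imports Defs
begin


definition sub :: "(nat \<times> nat) \<Rightarrow> (nat \<times> nat) list set \<Rightarrow> (nat \<times> nat) list set" where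
  "sub c S = {w. c # w \<in> S}"

lemma tv_Nil[simp]: "[] \<in> tree_verts k \<Delta>" by (simp add: tree_verts_def)
lemma tv_Cons[simp]: "(c # w \<in> tree_verts k \<Delta>) \<longleftrightarrow> fst c < \<Delta>-1 \<and> snd c < k-1 \<and> w \<in> tree_verts k \<Delta>"
  by (cases c) (auto simp: tree_verts_def)
lemma trv_Nil[simp]: "[] \<in> trunc_verts k \<Delta> n" by (simp add: trunc_verts_def)
lemma trv_Cons[simp]: "(c # w \<in> trunc_verts k \<Delta> (Suc n)) \<longleftrightarrow> fst c < \<Delta>-1 \<and> snd c < k-1 \<and> w \<in> trunc_verts k \<Delta> n"
  by (auto simp: trunc_verts_def)
lemma trv_Cons0[simp]: "(c # w \<notin> trunc_verts k \<Delta> 0)"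
  by (auto simp: trunc_verts_def)
lemma lev_Nil[simp]: "([] \<in> level k \<Delta> n) \<longleftrightarrow> n = 0" by (auto simp: level_def)
lemma lev_Cons[simp]: "(c#w \<in> level k \<Delta> (Suc n)) \<longleftrightarrow> fst c < \<Delta>-1 \<and> snd c < k-1 \<and> w \<in> level k \<Delta> n"
  by (auto simp: level_def)
lemma lev_Cons0[simp]: "(c#w \<notin> level k \<Delta> 0)"
  by (auto simp: level_def)
lemma trv_0: "trunc_verts k \<Delta> 0 = {[]}" by (auto simp: trunc_verts_def)
lemma lev_0: "level k \<Delta> 0 = {[]}" by (auto simp: level_def)
lemma lev_sub_trv: "level k \<Delta> n \<subseteq> trunc_verts k \<Delta> n" by (auto simp: level_def trunc_verts_def)

lemma hedge_Cons: "hedge k (c#v) i = (Cons c) ` hedge k v i"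
  by (auto simp: hedge_def)

lemma hedge_self: "v \<in> hedge k v i" by (simp add: hedge_def)
lemma hedge_child: "k \<ge> 2 \<Longrightarrow> v @ [(i,0)] \<in> hedge k v i" by (auto simp: hedge_def)

lemma trunc_edges_iff: "e \<in> trunc_edges k \<Delta> n \<longleftrightarrow>
   (\<exists>v i. v \<in> tree_verts k \<Delta> \<and> i < \<Delta>-1 \<and> e = hedge k v i \<and> hedge k v i \<subseteq> trunc_verts k \<Delta> n)"
  by (auto simp: trunc_edges_def tree_edges_def)

lemma finite_tree_verts_n: "finite (trunc_verts k \<Delta> n)"
proof -
  have "trunc_verts k \<Delta> n \<subseteq> {xs. set xs \<subseteq> {..<\<Delta>-1} \<times> {..<k-1} \<and> length xs \<le> n}"
    by (auto simp: trunc_verts_def tree_verts_def)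
  moreover have "finite {xs. set xs \<subseteq> {..<\<Delta>-1} \<times> {..<k-1} \<and> length xs \<le> n}"
    by (rule finite_lists_length_le) auto
  ultimately show ?thesis by (rule finite_subset)
qed

lemma finite_level: "finite (level k \<Delta> n)"
  by (rule finite_subset[OF lev_sub_trv finite_tree_verts_n])

lemma finite_indep: "finite (indep_sets k \<Delta> n)"
proof -
  have "indep_sets k \<Delta> n \<subseteq> Pow (trunc_verts k \<Delta> n)" by (auto simp: indep_sets_def)
  thus ?thesis by (rule finite_subset) (simp add: finite_tree_verts_n)
qed

lemma level_indep:
  assumes k: "k \<ge> 2" and "\<eta> \<subseteq> level k \<Delta> n"
  shows "\<eta> \<in> indep_sets k \<Delta> n"
proof -
  have "\<not> e \<subseteq> \<eta>" if "e \<in> trunc_edges k \<Delta> n" for e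
  proof
    assume sub: "e \<subseteq> \<eta>"
    from that obtain v i where e: "e = hedge k v i" by (auto simp: trunc_edges_iff)
    have "v \<in> \<eta>" "v @ [(i,0)] \<in> \<eta>" using sub e hedge_self hedge_child[OF k] by auto
    hence "length v = n" "length (v @ [(i,0)]) = n" using assms(2) by (auto simp: level_def)
    thus False by simp
  qed
  moreover have "\<eta> \<subseteq> trunc_verts k \<Delta> n" using assms(2) lev_sub_trv by blast
  ultimately show ?thesis by (auto simp: indep_sets_def)
qed

lemma indep_0: "k \<ge> 2 \<Longrightarrow> indep_sets k \<Delta> 0 = Pow {[]}"
proof -
  assume k: "k \<ge> 2"
  have "trunc_edges k \<Delta> 0 = {}"
  proof (rule ccontr)
    assume "trunc_edges k \<Delta> 0 \<noteq> {}"
    then obtain v i where "hedge k v i \<subseteq> trunc_verts k \<Delta> 0" by (auto simp: trunc_edges_iff)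
    hence "v @ [(i,0)] \<in> trunc_verts k \<Delta> 0" using hedge_child[OF k] by blast
    thus False by (simp add: trv_0)
  qed
  thus ?thesis by (auto simp: indep_sets_def trv_0)
qed

lemma indep_Suc:
  assumes k: "k \<ge> 2"
  shows "S \<in> indep_sets k \<Delta> (Suc n) \<longleftrightarrow> S \<subseteq> trunc_verts k \<Delta> (Suc n) \<and>
     (\<forall>c. sub c S \<in> indep_sets k \<Delta> n) \<and> ([] \<in> S \<longrightarrow> (\<forall>i<\<Delta>-1. \<exists>j<k-1. [(i,j)] \<notin> S))"
proof
  assume S: "S \<in> indep_sets k \<Delta> (Suc n)"
  hence SV: "S \<subseteq> trunc_verts k \<Delta> (Suc n)" and noe: "\<And>e. e \<in> trunc_edges k \<Delta> (Suc n) \<Longrightarrow> \<not> e \<subseteq> S"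
    by (auto simp: indep_sets_def)
  have "sub c S \<in> indep_sets k \<Delta> n" for c
  proof -
    have sv: "sub c S \<subseteq> trunc_verts k \<Delta> n" using SV by (auto simp: sub_def)
    have "\<not> e \<subseteq> sub c S" if e: "e \<in> trunc_edges k \<Delta> n" for e
    proof
      assume es: "e \<subseteq> sub c S"
      from e obtain w i where w: "w \<in> tree_verts k \<Delta>" "i < \<Delta>-1" "e = hedge k w i"
        "hedge k w i \<subseteq> trunc_verts k \<Delta> n" by (auto simp: trunc_edges_iff)
      have "c # w \<in> S" using es w(3) hedge_self by (auto simp: sub_def)
      hence cv: "fst c < \<Delta>-1" "snd c < k-1" using SV by auto
      have "hedge k (c#w) i \<subseteq> trunc_verts k \<Delta> (Suc n)" using w(4) cv by (auto simp: hedge_Cons)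
      hence "hedge k (c#w) i \<in> trunc_edges k \<Delta> (Suc n)"
        unfolding trunc_edges_iff using w cv by (intro exI[of _ "c#w"] exI[of _ i]) auto
      moreover have "hedge k (c#w) i \<subseteq> S" using es w(3) by (auto simp: hedge_Cons sub_def)
      ultimately show False using noe by blast
    qed
    thus ?thesis using sv by (auto simp: indep_sets_def)
  qed
  moreover have "\<exists>j<k-1. [(i,j)] \<notin> S" if "[] \<in> S" "i < \<Delta>-1" for i
  proof (rule ccontr)
    assume "\<not> ?thesis"
    hence all: "\<forall>j<k-1. [(i,j)] \<in> S" by blast
    have "hedge k [] i \<subseteq> S" using all that by (auto simp: hedge_def)
    moreover have "hedge k [] i \<subseteq> trunc_verts k \<Delta> (Suc n)" using that by (auto simp: hedge_def)
    hence "hedge k [] i \<in> trunc_edges k \<Delta> (Suc n)"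
      unfolding trunc_edges_iff using that by (intro exI[of _ "[]"] exI[of _ i]) auto
    ultimately show False using noe by blast
  qed
  ultimately show "S \<subseteq> trunc_verts k \<Delta> (Suc n) \<and>
     (\<forall>c. sub c S \<in> indep_sets k \<Delta> n) \<and> ([] \<in> S \<longrightarrow> (\<forall>i<\<Delta>-1. \<exists>j<k-1. [(i,j)] \<notin> S))"
    using SV by blast
next
  assume H: "S \<subseteq> trunc_verts k \<Delta> (Suc n) \<and>
     (\<forall>c. sub c S \<in> indep_sets k \<Delta> n) \<and> ([] \<in> S \<longrightarrow> (\<forall>i<\<Delta>-1. \<exists>j<k-1. [(i,j)] \<notin> S))"
  have noe: "\<not> e \<subseteq> S" if e: "e \<in> trunc_edges k \<Delta> (Suc n)" for e
  proof
    assume es: "e \<subseteq> S"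
    from e obtain v i where v: "v \<in> tree_verts k \<Delta>" "i < \<Delta>-1" "e = hedge k v i"
        by (auto simp: trunc_edges_iff)
    show False
    proof (cases v)
      case Nil
      have "[] \<in> S" using es v(3) Nil hedge_self by blast
      moreover have "\<forall>j<k-1. [(i,j)] \<in> S" using es v(3) Nil by (auto simp: hedge_def)
      ultimately show False using H v(2) by blast
    next
      case (Cons c w)
      have hs: "hedge k w i \<subseteq> sub c S" using es v(3) Cons by (auto simp: hedge_Cons sub_def)
      have si: "sub c S \<in> indep_sets k \<Delta> n" using H by blast
      hence "hedge k w i \<subseteq> trunc_verts k \<Delta> n" using hs by (auto simp: indep_sets_def)
      hence "hedge k w i \<in> trunc_edges k \<Delta> n"
        unfolding trunc_edges_iff using v Cons by auto
      thus False using si hs by (auto simp: indep_sets_def)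
    qed
  qed
  have "S \<subseteq> trunc_verts k \<Delta> (Suc n)" using H by blast
  thus "S \<in> indep_sets k \<Delta> (Suc n)" unfolding indep_sets_def by (intro CollectI conjI ballI noe)
qed

lemma lev_Suc_iff:
  assumes "S \<subseteq> trunc_verts k \<Delta> (Suc n)" "\<eta> \<subseteq> level k \<Delta> (Suc n)"
  shows "(S \<inter> level k \<Delta> (Suc n) = \<eta>) \<longleftrightarrow> (\<forall>c. sub c S \<inter> level k \<Delta> n = sub c \<eta>)"
proof
  assume H: "S \<inter> level k \<Delta> (Suc n) = \<eta>"
  show "\<forall>c. sub c S \<inter> level k \<Delta> n = sub c \<eta>"
  proof
    fix c
    show "sub c S \<inter> level k \<Delta> n = sub c \<eta>"
    proof (cases "fst c < \<Delta>-1 \<and> snd c < k-1")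
      case True
      thus ?thesis using H by (auto simp: sub_def)
    next
      case False
      have "sub c S = {}" using assms(1) False by (auto simp: sub_def)
      moreover have "sub c \<eta> = {}" using assms(2) False by (auto simp: sub_def)
      ultimately show ?thesis by simp
    qed
  qed
next
  assume H: "\<forall>c. sub c S \<inter> level k \<Delta> n = sub c \<eta>"
  show "S \<inter> level k \<Delta> (Suc n) = \<eta>"
  proof (rule set_eqI)
    fix v
    show "v \<in> S \<inter> level k \<Delta> (Suc n) \<longleftrightarrow> v \<in> \<eta>"
    proof (cases v)
      case Nil thus ?thesis using assms(2) by auto
    next
      case (Cons c w)
      have e1: "w \<in> sub c S \<inter> level k \<Delta> n \<longleftrightarrow> w \<in> sub c \<eta>" using H by blast
      have e2: "c#w \<in> S \<inter> level k \<Delta> (Suc n) \<longleftrightarrow> (c#w \<in> S \<and> (fst c < \<Delta>-1 \<and> snd c < k-1 \<and> w \<in> level k \<Delta> n))"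
        by simp
      have e3: "c#w \<in> \<eta> \<Longrightarrow> fst c < \<Delta>-1 \<and> snd c < k-1 \<and> w \<in> level k \<Delta> n"
        using assms(2) lev_Cons by blast
      show ?thesis unfolding Cons e2 using e1 e3 unfolding sub_def by blast
    qed
  qed
qed


definition Aset :: "nat \<Rightarrow> nat \<Rightarrow> nat \<Rightarrow> (nat\<times>nat) list set \<Rightarrow> (nat\<times>nat) list set set" where
  "Aset k \<Delta> n \<eta> = {S \<in> indep_sets k \<Delta> n. S \<inter> level k \<Delta> n = \<eta>}"

definition A1set :: "nat \<Rightarrow> nat \<Rightarrow> nat \<Rightarrow> (nat\<times>nat) list set \<Rightarrow> (nat\<times>nat) list set set" where
  "A1set k \<Delta> n \<eta> = {S \<in> indep_sets k \<Delta> n. [] \<in> S \<and> S \<inter> level k \<Delta> n = \<eta>}"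

definition mk :: "nat \<Rightarrow> nat \<Rightarrow> bool \<Rightarrow> (nat \<Rightarrow> nat \<Rightarrow> (nat\<times>nat) list set) \<Rightarrow> (nat\<times>nat) list set" where
  "mk k \<Delta> b g = (if b then {[]} else {}) \<union> {(i,j)#w | i j w. i<\<Delta>-1 \<and> j<k-1 \<and> w \<in> g i j}"

definition Dom where "Dom k \<Delta> n \<eta> b = {S \<in> indep_sets k \<Delta> (Suc n). ([]\<in>S \<longleftrightarrow> b) \<and> S \<inter> level k \<Delta> (Suc n) = \<eta>}"

definition Tgt where "Tgt k \<Delta> n \<eta> b = {g \<in> PiE {..<\<Delta>-1} (\<lambda>i. PiE {..<k-1} (\<lambda>j. Aset k \<Delta> n (sub (i,j) \<eta>))).
   b \<longrightarrow> (\<forall>i<\<Delta>-1. \<exists>j<k-1. [] \<notin> g i j)}"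

definition phi where "phi k \<Delta> S = (\<lambda>i\<in>{..<\<Delta>-1}. \<lambda>j\<in>{..<k-1}. sub (i,j) S)"

lemma sub_mk: "sub (i,j) (mk k \<Delta> b g) = (if i<\<Delta>-1 \<and> j<k-1 then g i j else {})"
  by (auto simp: sub_def mk_def)

lemma Nil_mk: "([] \<in> mk k \<Delta> b g) = b" by (auto simp: mk_def)

lemma empty_indep: "k \<ge> 2 \<Longrightarrow> {} \<in> indep_sets k \<Delta> n"
  by (rule level_indep) auto

lemma sub_level_invalid: "\<eta> \<subseteq> level k \<Delta> (Suc n) \<Longrightarrow> \<not> (i<\<Delta>-1 \<and> j<k-1) \<Longrightarrow> sub (i,j) \<eta> = {}"
  by (auto simp: sub_def dest!: subsetD)

lemma sub_level_valid: "\<eta> \<subseteq> level k \<Delta> (Suc n) \<Longrightarrow> sub c \<eta> \<subseteq> level k \<Delta> n"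
  by (auto simp: sub_def dest!: subsetD)

lemma Aset_sub: "S \<in> Aset k \<Delta> n \<eta> \<Longrightarrow> S \<subseteq> trunc_verts k \<Delta> n"
  by (auto simp: Aset_def indep_sets_def)

lemma bij_phi:
  assumes k: "k \<ge> 2" and eta: "\<eta> \<subseteq> level k \<Delta> (Suc n)"
  shows "bij_betw (phi k \<Delta>) (Dom k \<Delta> n \<eta> b) (Tgt k \<Delta> n \<eta> b)"
proof (rule bij_betwI[where g = "mk k \<Delta> b"])
  show "phi k \<Delta> \<in> Dom k \<Delta> n \<eta> b \<rightarrow> Tgt k \<Delta> n \<eta> b"
  proof
    fix S assume S: "S \<in> Dom k \<Delta> n \<eta> b"
    hence Si: "S \<in> indep_sets k \<Delta> (Suc n)" and Sb: "[]\<in>S \<longleftrightarrow> b" and Sl: "S \<inter> level k \<Delta> (Suc n) = \<eta>"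
      by (auto simp: Dom_def)
    note I = Si[unfolded indep_Suc[OF k]]
    have SV: "S \<subseteq> trunc_verts k \<Delta> (Suc n)" using I by blast
    note L = Sl[unfolded lev_Suc_iff[OF SV eta]]
    have A: "sub (i,j) S \<in> Aset k \<Delta> n (sub (i,j) \<eta>)" for i j
      using I L by (auto simp: Aset_def)
    have P: "phi k \<Delta> S \<in> PiE {..<\<Delta>-1} (\<lambda>i. PiE {..<k-1} (\<lambda>j. Aset k \<Delta> n (sub (i,j) \<eta>)))"
      unfolding phi_def using A by auto
    have R: "\<forall>i<\<Delta>-1. \<exists>j<k-1. [] \<notin> phi k \<Delta> S i j" if b
    proof (intro allI impI)
      fix i assume i: "i < \<Delta>-1"
      have "[] \<in> S" using Sb that by simp
      then obtain j where "j < k-1" "[(i,j)] \<notin> S" using I i by blast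
      thus "\<exists>j<k-1. [] \<notin> phi k \<Delta> S i j" using i by (auto simp: phi_def sub_def)
    qed
    show "phi k \<Delta> S \<in> Tgt k \<Delta> n \<eta> b" unfolding Tgt_def using P R by blast
  qed
next
  show "mk k \<Delta> b \<in> Tgt k \<Delta> n \<eta> b \<rightarrow> Dom k \<Delta> n \<eta> b"
  proof
    fix g assume g: "g \<in> Tgt k \<Delta> n \<eta> b"
    hence gP: "\<And>i j. i<\<Delta>-1 \<Longrightarrow> j<k-1 \<Longrightarrow> g i j \<in> Aset k \<Delta> n (sub (i,j) \<eta>)"
      and gR: "b \<Longrightarrow> \<forall>i<\<Delta>-1. \<exists>j<k-1. [] \<notin> g i j"
      by (auto simp: Tgt_def)
    let ?S = "mk k \<Delta> b g"
    have SV: "?S \<subseteq> trunc_verts k \<Delta> (Suc n)"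
    proof
      fix v assume "v \<in> ?S"
      then consider "v = []" | i j w where "v = (i,j)#w" "i<\<Delta>-1" "j<k-1" "w \<in> g i j"
        by (auto simp: mk_def split: if_splits)
      thus "v \<in> trunc_verts k \<Delta> (Suc n)"
      proof cases
        case 2
        have "w \<in> trunc_verts k \<Delta> n" using Aset_sub[OF gP[OF 2(2,3)]] 2(4) by blast
        thus ?thesis using 2 by simp
      qed simp
    qed
    have subI: "sub c ?S \<in> indep_sets k \<Delta> n" for c
    proof (cases c)
      case (Pair i j)
      show ?thesis unfolding Pair sub_mk using gP empty_indep[OF k] by (auto simp: Aset_def)
    qed
    have root: "[] \<in> ?S \<longrightarrow> (\<forall>i<\<Delta>-1. \<exists>j<k-1. [(i,j)] \<notin> ?S)"
    proof (intro impI allI)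
      fix i assume "[] \<in> ?S" "i < \<Delta>-1"
      hence "b" using Nil_mk by metis
      then obtain j where j: "j<k-1" "[] \<notin> g i j" using gR \<open>i < \<Delta>-1\<close> by blast
      have "[(i,j)] \<notin> ?S"
      proof
        assume "[(i,j)] \<in> ?S"
        hence "[] \<in> sub (i,j) ?S" by (simp add: sub_def)
        thus False using j \<open>i < \<Delta>-1\<close> by (simp add: sub_mk)
      qed
      thus "\<exists>j<k-1. [(i,j)] \<notin> ?S" using j by blast
    qed
    have Si: "?S \<in> indep_sets k \<Delta> (Suc n)" unfolding indep_Suc[OF k] using SV subI root by blast
    have lv: "\<forall>c. sub c ?S \<inter> level k \<Delta> n = sub c \<eta>"
    proof
      fix c show "sub c ?S \<inter> level k \<Delta> n = sub c \<eta>"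
      proof (cases c)
        case (Pair i j)
        show ?thesis
        proof (cases "i<\<Delta>-1 \<and> j<k-1")
          case True thus ?thesis using gP[of i j] Pair by (simp add: sub_mk Aset_def)
        next
          case False thus ?thesis using sub_level_invalid[OF eta False] Pair by (auto simp: sub_mk)
        qed
      qed
    qed
    have Sl: "?S \<inter> level k \<Delta> (Suc n) = \<eta>" using lev_Suc_iff[OF SV eta] lv by blast
    show "?S \<in> Dom k \<Delta> n \<eta> b" unfolding Dom_def using Si Sl Nil_mk by blast
  qed
next
  fix S assume S: "S \<in> Dom k \<Delta> n \<eta> b"
  hence Sb: "[]\<in>S \<longleftrightarrow> b" and SV: "S \<subseteq> trunc_verts k \<Delta> (Suc n)"
    by (auto simp: Dom_def indep_sets_def)
  show "mk k \<Delta> b (phi k \<Delta> S) = S"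
  proof (rule set_eqI)
    fix v show "v \<in> mk k \<Delta> b (phi k \<Delta> S) \<longleftrightarrow> v \<in> S"
    proof (cases v)
      case Nil thus ?thesis using Sb Nil_mk by metis
    next
      case (Cons c w)
      obtain i j where c: "c = (i,j)" by (cases c)
      have "v \<in> mk k \<Delta> b (phi k \<Delta> S) \<longleftrightarrow> w \<in> sub (i,j) (mk k \<Delta> b (phi k \<Delta> S))"
        using Cons c by (simp add: sub_def)
      also have "\<dots> \<longleftrightarrow> (i<\<Delta>-1 \<and> j<k-1 \<and> w \<in> sub (i,j) S)"
        by (auto simp: sub_mk phi_def)
      also have "\<dots> \<longleftrightarrow> v \<in> S" using Cons c SV by (auto simp: sub_def)
      finally show ?thesis .
    qed
  qed
next
  fix g assume g: "g \<in> Tgt k \<Delta> n \<eta> b"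
  hence gE: "g \<in> PiE {..<\<Delta>-1} (\<lambda>i. PiE {..<k-1} (\<lambda>j. Aset k \<Delta> n (sub (i,j) \<eta>)))"
    by (simp add: Tgt_def)
  show "phi k \<Delta> (mk k \<Delta> b g) = g"
  proof (rule ext)
    fix i show "phi k \<Delta> (mk k \<Delta> b g) i = g i"
    proof (cases "i < \<Delta>-1")
      case True
      have gi: "g i \<in> PiE {..<k-1} (\<lambda>j. Aset k \<Delta> n (sub (i,j) \<eta>))" using gE True by auto
      show ?thesis
      proof (rule ext)
        fix j show "phi k \<Delta> (mk k \<Delta> b g) i j = g i j"
          using True gi by (cases "j < k-1") (auto simp: phi_def sub_mk PiE_def extensional_def)
      qed
    next
      case False thus ?thesis using gE by (auto simp: phi_def PiE_def extensional_def)
    qed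
  qed
qed

lemma finite_Aset: "finite (Aset k \<Delta> n \<eta>)"
  unfolding Aset_def by (rule finite_subset[OF _ finite_indep[of k \<Delta> n]]) auto

lemma finite_A1set: "finite (A1set k \<Delta> n \<eta>)"
  unfolding A1set_def by (rule finite_subset[OF _ finite_indep[of k \<Delta> n]]) auto

lemma A1_sub_A: "A1set k \<Delta> n \<eta> \<subseteq> Aset k \<Delta> n \<eta>"
  by (auto simp: A1set_def Aset_def)

lemma Tgt_False: "Tgt k \<Delta> n \<eta> False = PiE {..<\<Delta>-1} (\<lambda>i. PiE {..<k-1} (\<lambda>j. Aset k \<Delta> n (sub (i,j) \<eta>)))"
  by (simp add: Tgt_def)

lemma Tgt_True: "Tgt k \<Delta> n \<eta> True = PiE {..<\<Delta>-1} (\<lambda>i. PiE {..<k-1} (\<lambda>j. Aset k \<Delta> n (sub (i,j) \<eta>))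
     - PiE {..<k-1} (\<lambda>j. A1set k \<Delta> n (sub (i,j) \<eta>)))"
proof (rule set_eqI)
  fix g
  show "g \<in> Tgt k \<Delta> n \<eta> True \<longleftrightarrow> g \<in> PiE {..<\<Delta>-1} (\<lambda>i. PiE {..<k-1} (\<lambda>j. Aset k \<Delta> n (sub (i,j) \<eta>))
     - PiE {..<k-1} (\<lambda>j. A1set k \<Delta> n (sub (i,j) \<eta>)))"
  proof
    assume g: "g \<in> Tgt k \<Delta> n \<eta> True"
    hence gE: "g \<in> PiE {..<\<Delta>-1} (\<lambda>i. PiE {..<k-1} (\<lambda>j. Aset k \<Delta> n (sub (i,j) \<eta>)))"
      and gR: "\<forall>i<\<Delta>-1. \<exists>j<k-1. [] \<notin> g i j" by (auto simp: Tgt_def)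
    have "g i \<notin> PiE {..<k-1} (\<lambda>j. A1set k \<Delta> n (sub (i,j) \<eta>))" if i: "i < \<Delta>-1" for i
    proof
      assume "g i \<in> PiE {..<k-1} (\<lambda>j. A1set k \<Delta> n (sub (i,j) \<eta>))"
      moreover obtain j where "j<k-1" "[] \<notin> g i j" using gR i by blast
      ultimately show False by (auto simp: A1set_def)
    qed
    thus "g \<in> PiE {..<\<Delta>-1} (\<lambda>i. PiE {..<k-1} (\<lambda>j. Aset k \<Delta> n (sub (i,j) \<eta>))
     - PiE {..<k-1} (\<lambda>j. A1set k \<Delta> n (sub (i,j) \<eta>)))" using gE by (auto simp: PiE_iff)
  next
    assume g: "g \<in> PiE {..<\<Delta>-1} (\<lambda>i. PiE {..<k-1} (\<lambda>j. Aset k \<Delta> n (sub (i,j) \<eta>))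
     - PiE {..<k-1} (\<lambda>j. A1set k \<Delta> n (sub (i,j) \<eta>)))"
    hence gE: "g \<in> PiE {..<\<Delta>-1} (\<lambda>i. PiE {..<k-1} (\<lambda>j. Aset k \<Delta> n (sub (i,j) \<eta>)))"
      by (auto simp: PiE_iff)
    have "\<exists>j<k-1. [] \<notin> g i j" if i: "i < \<Delta>-1" for i
    proof (rule ccontr)
      assume "\<not> ?thesis"
      hence "\<forall>j<k-1. [] \<in> g i j" by blast
      moreover have "g i \<in> PiE {..<k-1} (\<lambda>j. Aset k \<Delta> n (sub (i,j) \<eta>))" using gE i by auto
      ultimately have "g i \<in> PiE {..<k-1} (\<lambda>j. A1set k \<Delta> n (sub (i,j) \<eta>))"
        by (auto simp: PiE_iff A1set_def Aset_def)
      thus False using g i by (auto simp: PiE_iff)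
    qed
    thus "g \<in> Tgt k \<Delta> n \<eta> True" using gE by (auto simp: Tgt_def)
  qed
qed

lemma card_Dom_False:
  assumes k: "k \<ge> 2" and eta: "\<eta> \<subseteq> level k \<Delta> (Suc n)"
  shows "card (Dom k \<Delta> n \<eta> False) = (\<Prod>i<\<Delta>-1. \<Prod>j<k-1. card (Aset k \<Delta> n (sub (i,j) \<eta>)))"
  using bij_betw_same_card[OF bij_phi[OF k eta, of False]]
  by (simp add: Tgt_False card_PiE)

lemma card_Dom_True:
  assumes k: "k \<ge> 2" and eta: "\<eta> \<subseteq> level k \<Delta> (Suc n)"
  shows "card (Dom k \<Delta> n \<eta> True) = (\<Prod>i<\<Delta>-1. (\<Prod>j<k-1. card (Aset k \<Delta> n (sub (i,j) \<eta>)))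
       - (\<Prod>j<k-1. card (A1set k \<Delta> n (sub (i,j) \<eta>))))"
proof -
  have "card (Dom k \<Delta> n \<eta> True) = card (Tgt k \<Delta> n \<eta> True)"
    using bij_betw_same_card[OF bij_phi[OF k eta, of True]] .
  also have "\<dots> = (\<Prod>i<\<Delta>-1. card (PiE {..<k-1} (\<lambda>j. Aset k \<Delta> n (sub (i,j) \<eta>))
     - PiE {..<k-1} (\<lambda>j. A1set k \<Delta> n (sub (i,j) \<eta>))))"
    unfolding Tgt_True by (simp add: card_PiE)
  also have "\<dots> = (\<Prod>i<\<Delta>-1. (\<Prod>j<k-1. card (Aset k \<Delta> n (sub (i,j) \<eta>)))
       - (\<Prod>j<k-1. card (A1set k \<Delta> n (sub (i,j) \<eta>))))"
  proof (rule prod.cong[OF refl])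
    fix i
    have sub: "PiE {..<k-1} (\<lambda>j. A1set k \<Delta> n (sub (i,j) \<eta>)) \<subseteq> PiE {..<k-1} (\<lambda>j. Aset k \<Delta> n (sub (i,j) \<eta>))"
      by (rule PiE_mono) (rule A1_sub_A)
    have fin: "finite (PiE {..<k-1} (\<lambda>j. A1set k \<Delta> n (sub (i,j) \<eta>)))"
      by (rule finite_PiE) (auto simp: finite_A1set)
    show "card (PiE {..<k-1} (\<lambda>j. Aset k \<Delta> n (sub (i,j) \<eta>)) - PiE {..<k-1} (\<lambda>j. A1set k \<Delta> n (sub (i,j) \<eta>)))
      = (\<Prod>j<k-1. card (Aset k \<Delta> n (sub (i,j) \<eta>))) - (\<Prod>j<k-1. card (A1set k \<Delta> n (sub (i,j) \<eta>)))"
      using card_Diff_subset[OF fin sub] by (simp add: card_PiE)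
  qed
  finally show ?thesis .
qed


definition Phi :: "nat \<Rightarrow> nat \<Rightarrow> (nat\<Rightarrow>nat\<Rightarrow>real) \<Rightarrow> real" where
  "Phi m d p = (\<Prod>i<d. (1 - (\<Prod>j<m. p i j))) / (1 + (\<Prod>i<d. (1 - (\<Prod>j<m. p i j))))"

lemma rp_eq: "root_prob k \<Delta> n \<eta> = real (card (A1set k \<Delta> n \<eta>)) / real (card (Aset k \<Delta> n \<eta>))"
  by (simp add: root_prob_def A1set_def Aset_def)

lemma Dom_True_eq: "Dom k \<Delta> n \<eta> True = A1set k \<Delta> (Suc n) \<eta>"
  by (auto simp: Dom_def A1set_def)

lemma Aset_split: "Aset k \<Delta> (Suc n) \<eta> = Dom k \<Delta> n \<eta> False \<union> Dom k \<Delta> n \<eta> True"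
  by (auto simp: Dom_def Aset_def)

lemma card_Aset_Suc: "card (Aset k \<Delta> (Suc n) \<eta>) = card (Dom k \<Delta> n \<eta> False) + card (Dom k \<Delta> n \<eta> True)"
proof -
  have f: "finite (Dom k \<Delta> n \<eta> b)" for b
    unfolding Dom_def by (rule finite_subset[OF _ finite_indep[of k \<Delta> "Suc n"]]) auto
  have "Dom k \<Delta> n \<eta> False \<inter> Dom k \<Delta> n \<eta> True = {}" by (auto simp: Dom_def)
  thus ?thesis unfolding Aset_split by (rule card_Un_disjoint[OF f f])
qed

lemma Aset_pos: "k \<ge> 2 \<Longrightarrow> \<eta> \<subseteq> level k \<Delta> n \<Longrightarrow> card (Aset k \<Delta> n \<eta>) > 0"
proof -
  assume k: "k \<ge> 2" and e: "\<eta> \<subseteq> level k \<Delta> n"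
  have "\<eta> \<in> Aset k \<Delta> n \<eta>" using level_indep[OF k e] e by (auto simp: Aset_def)
  thus ?thesis using finite_Aset card_gt_0_iff by blast
qed

lemma card_A1_le: "card (A1set k \<Delta> n \<eta>) \<le> card (Aset k \<Delta> n \<eta>)"
  by (rule card_mono[OF finite_Aset A1_sub_A])

lemma rp_Suc:
  assumes k: "k \<ge> 2" and eta: "\<eta> \<subseteq> level k \<Delta> (Suc n)"
  shows "root_prob k \<Delta> (Suc n) \<eta> = Phi (k-1) (\<Delta>-1) (\<lambda>i j. root_prob k \<Delta> n (sub (i,j) \<eta>))"
proof -
  define T where "T i j = real (card (Aset k \<Delta> n (sub (i,j) \<eta>)))" for i j
  define M where "M i j = real (card (A1set k \<Delta> n (sub (i,j) \<eta>)))" for i j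
  have Tpos: "T i j > 0" for i j
    unfolding T_def using Aset_pos[OF k sub_level_valid[OF eta]] by simp
  have rp: "root_prob k \<Delta> n (sub (i,j) \<eta>) = M i j / T i j" for i j
    by (simp add: rp_eq M_def T_def)
  define R where "R = (\<Prod>i<\<Delta>-1. (1 - (\<Prod>j<k-1. M i j / T i j)))"
  define P where "P = (\<Prod>i<\<Delta>-1. \<Prod>j<k-1. T i j)"
  have Ppos: "P > 0" unfolding P_def using Tpos by (auto intro!: prod_pos)
  have D0: "real (card (Dom k \<Delta> n \<eta> False)) = P"
    unfolding card_Dom_False[OF k eta] P_def T_def by simp
  have D1: "real (card (Dom k \<Delta> n \<eta> True)) = P * R"
  proof -
    have le: "(\<Prod>j<k-1. card (A1set k \<Delta> n (sub (i,j) \<eta>))) \<le> (\<Prod>j<k-1. card (Aset k \<Delta> n (sub (i,j) \<eta>)))" for i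
      by (rule prod_mono) (simp add: card_A1_le)
    have "real (card (Dom k \<Delta> n \<eta> True)) = (\<Prod>i<\<Delta>-1. (\<Prod>j<k-1. T i j) - (\<Prod>j<k-1. M i j))"
      unfolding card_Dom_True[OF k eta] T_def M_def using le by (simp add: of_nat_diff)
    also have "\<dots> = (\<Prod>i<\<Delta>-1. (\<Prod>j<k-1. T i j) * (1 - (\<Prod>j<k-1. M i j / T i j)))"
    proof (rule prod.cong[OF refl])
      fix i
      have "(\<Prod>j<k-1. M i j / T i j) = (\<Prod>j<k-1. M i j) / (\<Prod>j<k-1. T i j)"
        by (rule prod_dividef)
      moreover have "(\<Prod>j<k-1. T i j) > 0" using Tpos by (auto intro!: prod_pos)
      moreover have gen: "\<And>X Y::real. X > 0 \<Longrightarrow> X - Y = X*(1 - Y/X)" by (simp add: field_simps)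
      ultimately show "(\<Prod>j<k-1. T i j) - (\<Prod>j<k-1. M i j) = (\<Prod>j<k-1. T i j) * (1 - (\<Prod>j<k-1. M i j / T i j))"
        by metis
    qed
    also have "\<dots> = P * R" unfolding P_def R_def by (rule prod.distrib)
    finally show ?thesis .
  qed
  have "root_prob k \<Delta> (Suc n) \<eta> = (P * R) / (P + P * R)"
    unfolding rp_eq card_Aset_Suc Dom_True_eq[symmetric] using D0 D1 by simp
  also have "\<dots> = R / (1 + R)" using Ppos
    by (metis (no_types, lifting) distrib_left mult.right_neutral mult_divide_mult_cancel_left_if order_less_irrefl)
  also have "\<dots> = Phi (k-1) (\<Delta>-1) (\<lambda>i j. root_prob k \<Delta> n (sub (i,j) \<eta>))"
    unfolding Phi_def R_def rp by simp
  finally show ?thesis .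
qed

lemma rp_0:
  assumes k: "k \<ge> 2" and eta: "\<eta> \<subseteq> level k \<Delta> 0"
  shows "root_prob k \<Delta> 0 \<eta> = (if [] \<in> \<eta> then 1 else 0)"
proof -
  have A: "Aset k \<Delta> 0 \<eta> = {\<eta>}" using eta by (auto simp: Aset_def indep_0[OF k] lev_0)
  have A1: "A1set k \<Delta> 0 \<eta> = (if [] \<in> \<eta> then {\<eta>} else {})" using eta
    by (auto simp: A1set_def indep_0[OF k] lev_0)
  show ?thesis unfolding rp_eq A A1 by simp
qed

lemma sub_empty: "sub c {} = {}" by (simp add: sub_def)

lemma sub_level: "fst c < \<Delta>-1 \<Longrightarrow> snd c < k-1 \<Longrightarrow> sub c (level k \<Delta> (Suc n)) = level k \<Delta> n"
  by (auto simp: sub_def)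


definition F :: "nat \<Rightarrow> nat \<Rightarrow> real \<Rightarrow> real" where
  "F m d p = (1-p^m)^d / (1 + (1-p^m)^d)"

lemma xf_mono: "0 \<le> (a::real) \<Longrightarrow> a \<le> b \<Longrightarrow> a/(1+a) \<le> b/(1+b)"
  by (simp add: field_simps)

lemma h_range: "0 \<le> (p::real) \<Longrightarrow> p \<le> 1 \<Longrightarrow> 0 \<le> (1-p^m)^d \<and> (1-p^m)^d \<le> 1"
proof -
  assume "0 \<le> p" "p \<le> 1"
  hence "0 \<le> p^m" "p^m \<le> 1" by (auto simp: power_le_one)
  thus ?thesis by (auto simp: power_le_one)
qed

lemma F_range: "0 \<le> p \<Longrightarrow> p \<le> 1 \<Longrightarrow> 0 \<le> F m d p \<and> F m d p \<le> 1/2"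
  using h_range[of p m d] unfolding F_def by (auto simp: field_simps)

lemma F_anti: "0 \<le> p \<Longrightarrow> p \<le> q \<Longrightarrow> q \<le> 1 \<Longrightarrow> F m d q \<le> F m d p"
proof -
  assume a: "0 \<le> p" "p \<le> q" "q \<le> 1"
  have "p^m \<le> q^m" using a by (simp add: power_mono)
  moreover have "q^m \<le> 1" using a by (simp add: power_le_one)
  ultimately have h1: "(1-q^m)^d \<le> (1-p^m)^d" by (intro power_mono) auto
  have h0: "0 \<le> (1-q^m)^d" using h_range[of q m d] a by auto
  show ?thesis unfolding F_def by (rule xf_mono[OF h0 h1])
qed

lemma Phi_const: "Phi m d (\<lambda>i j. c) = F m d c"
  by (simp add: Phi_def F_def)

lemma Phi_mono:
  assumes "\<And>i j. i < d \<Longrightarrow> j < m \<Longrightarrow> 0 \<le> p i j \<and> p i j \<le> q i j \<and> q i j \<le> 1"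
  shows "Phi m d q \<le> Phi m d p"
proof -
  have inner: "(\<Prod>j<m. p i j) \<le> (\<Prod>j<m. q i j)" if "i<d" for i
    by (rule prod_mono) (use assms that in auto)
  have q1: "(\<Prod>j<m. q i j) \<le> 1" if "i<d" for i
  proof (rule prod_le_1)
    fix j assume "j \<in> {..<m}"
    hence "0 \<le> p i j \<and> p i j \<le> q i j \<and> q i j \<le> 1" using assms that by simp
    thus "0 \<le> q i j \<and> q i j \<le> 1" by linarith
  qed
  have R: "(\<Prod>i<d. (1 - (\<Prod>j<m. q i j))) \<le> (\<Prod>i<d. (1 - (\<Prod>j<m. p i j)))"
    by (rule prod_mono) (use inner q1 in auto)
  have R0: "0 \<le> (\<Prod>i<d. (1 - (\<Prod>j<m. q i j)))"
    by (rule prod_nonneg) (use q1 in auto)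
  show ?thesis unfolding Phi_def by (rule xf_mono[OF R0 R])
qed

lemma Fiter_range: "0 \<le> x \<Longrightarrow> x \<le> 1 \<Longrightarrow> 0 \<le> (F m d ^^ n) x \<and> (F m d ^^ n) x \<le> 1"
  by (induction n) (auto dest: F_range[of _ m d])

lemma rp_range: "0 \<le> root_prob k \<Delta> n \<eta> \<and> root_prob k \<Delta> n \<eta> \<le> 1"
proof (cases "card (Aset k \<Delta> n \<eta>) = 0")
  case True thus ?thesis by (simp add: rp_eq)
next
  case False thus ?thesis using card_A1_le[of k \<Delta> n \<eta>] by (simp add: rp_eq divide_le_eq_1)
qed

lemma rp_bounds:
  assumes k: "k \<ge> 2"
  shows "\<eta> \<subseteq> level k \<Delta> n \<Longrightarrow>
    min ((F (k-1) (\<Delta>-1) ^^ n) 0) ((F (k-1) (\<Delta>-1) ^^ n) 1) \<le> root_prob k \<Delta> n \<eta> \<and>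
    root_prob k \<Delta> n \<eta> \<le> max ((F (k-1) (\<Delta>-1) ^^ n) 0) ((F (k-1) (\<Delta>-1) ^^ n) 1)"
proof (induction n arbitrary: \<eta>)
  case 0
  thus ?case using rp_0[OF k 0] by simp
next
  case (Suc n)
  let ?F = "F (k-1) (\<Delta>-1)"
  define a where "a = (?F ^^ n) 0"
  define b where "b = (?F ^^ n) 1"
  have ab: "0 \<le> a" "a \<le> 1" "0 \<le> b" "b \<le> 1" unfolding a_def b_def using Fiter_range by auto
  let ?p = "\<lambda>i j. root_prob k \<Delta> n (sub (i,j) \<eta>)"
  have pb: "min a b \<le> ?p i j \<and> ?p i j \<le> max a b" for i j
    using Suc.IH[OF sub_level_valid[OF Suc.prems]] unfolding a_def b_def by blast
  have up: "Phi (k-1) (\<Delta>-1) ?p \<le> ?F (min a b)"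
    unfolding Phi_const[symmetric] by (rule Phi_mono) (use pb ab rp_range in auto)
  have lo: "?F (max a b) \<le> Phi (k-1) (\<Delta>-1) ?p"
    unfolding Phi_const[symmetric] by (rule Phi_mono) (use pb ab rp_range in auto)
  have "?F (min a b) = max (?F a) (?F b)" using ab F_anti[of a b "k-1" "\<Delta>-1"] F_anti[of b a "k-1" "\<Delta>-1"]
    by (cases "a \<le> b") (auto simp: min_def max_def)
  moreover have "?F (max a b) = min (?F a) (?F b)" using ab F_anti[of a b "k-1" "\<Delta>-1"] F_anti[of b a "k-1" "\<Delta>-1"]
    by (cases "a \<le> b") (auto simp: min_def max_def)
  moreover have "(?F ^^ Suc n) 0 = ?F a" "(?F ^^ Suc n) 1 = ?F b" by (simp_all add: a_def b_def)
  ultimately show ?case using up lo rp_Suc[OF k Suc.prems] by simp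
qed

lemma rp_empty: "k \<ge> 2 \<Longrightarrow> root_prob k \<Delta> n {} = (F (k-1) (\<Delta>-1) ^^ n) 0"
proof (induction n)
  case 0 thus ?case using rp_0[of k "{}"] by simp
next
  case (Suc n)
  thus ?case using rp_Suc[of k "{}" \<Delta> n] by (simp add: sub_empty Phi_const)
qed

lemma rp_full: "k \<ge> 2 \<Longrightarrow> root_prob k \<Delta> n (level k \<Delta> n) = (F (k-1) (\<Delta>-1) ^^ n) 1"
proof (induction n)
  case 0 thus ?case using rp_0[of k "level k \<Delta> 0"] by (simp add: lev_0)
next
  case (Suc n)
  have "root_prob k \<Delta> (Suc n) (level k \<Delta> (Suc n)) = Phi (k-1) (\<Delta>-1) (\<lambda>i j. root_prob k \<Delta> n (sub (i,j) (level k \<Delta> (Suc n))))"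
    using rp_Suc[OF Suc.prems, of "level k \<Delta> (Suc n)"] by simp
  also have "\<dots> = Phi (k-1) (\<Delta>-1) (\<lambda>i j. root_prob k \<Delta> n (level k \<Delta> n))"
    unfolding Phi_def by (intro arg_cong2[where f="(/)"] prod.cong refl arg_cong2[where f="(+)"]
       arg_cong2[where f="(-)"]) (simp_all add: sub_level)
  also have "\<dots> = (F (k-1) (\<Delta>-1) ^^ Suc n) 1" using Suc by (simp add: Phi_const)
  finally show ?case .
qed

lemma max_infl:
  assumes k: "k \<ge> 2"
  shows "max_influence k \<Delta> n = \<bar>(F (k-1) (\<Delta>-1) ^^ n) 0 - (F (k-1) (\<Delta>-1) ^^ n) 1\<bar>"
proof -
  let ?S = "{\<bar>root_prob k \<Delta> n \<eta> - root_prob k \<Delta> n \<eta>'\<bar> | \<eta> \<eta>'.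
      \<eta> \<subseteq> level k \<Delta> n \<and> \<eta>' \<subseteq> level k \<Delta> n}"
  let ?v = "\<bar>(F (k-1) (\<Delta>-1) ^^ n) 0 - (F (k-1) (\<Delta>-1) ^^ n) 1\<bar>"
  have fin: "finite ?S"
  proof -
    have "?S = (\<lambda>(\<eta>,\<eta>'). \<bar>root_prob k \<Delta> n \<eta> - root_prob k \<Delta> n \<eta>'\<bar>) ` (Pow (level k \<Delta> n) \<times> Pow (level k \<Delta> n))"
      by auto
    thus ?thesis using finite_level by simp
  qed
  have mem: "?v \<in> ?S"
    using rp_empty[OF k, of \<Delta> n] rp_full[OF k, of \<Delta> n]
    by (intro CollectI exI[of _ "{}"] exI[of _ "level k \<Delta> n"]) auto
  have ub: "x \<le> ?v" if "x \<in> ?S" for x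
  proof -
    from that obtain \<eta> \<eta>' where e: "\<eta> \<subseteq> level k \<Delta> n" "\<eta>' \<subseteq> level k \<Delta> n"
      "x = \<bar>root_prob k \<Delta> n \<eta> - root_prob k \<Delta> n \<eta>'\<bar>" by blast
    show ?thesis using rp_bounds[OF k e(1)] rp_bounds[OF k e(2)] e(3) by (auto simp: min_def max_def abs_if split: if_splits)
  qed
  show ?thesis unfolding max_influence_def by (rule Max_eqI[OF fin ub mem])
qed


definition Cyc :: "nat \<Rightarrow> nat \<Rightarrow> bool" where
  "Cyc m d \<longleftrightarrow> (\<exists>x y. 0 \<le> x \<and> x < y \<and> y \<le> 1 \<and> y \<le> F m d x \<and> F m d y \<le> x)"

lemma F_one: "m \<ge> 1 \<Longrightarrow> d \<ge> 1 \<Longrightarrow> F m d 1 = 0"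
  by (simp add: F_def)

lemma F_zero: "m \<ge> 1 \<Longrightarrow> F m d 0 = 1/2"
  by (cases m) (simp_all add: F_def)

lemma F_isCont: "0 \<le> x \<Longrightarrow> x \<le> 1 \<Longrightarrow> isCont (F m d) x"
proof -
  assume "0 \<le> x" "x \<le> 1"
  hence "1 + (1 - x^m)^d \<noteq> 0" using h_range[of x m d] by auto
  thus ?thesis unfolding F_def by (intro continuous_intros) auto
qed

lemma F_cont_on: "continuous_on {0..1} (F m d)"
  by (intro continuous_at_imp_continuous_on ballI F_isCont) auto

context
  fixes m d :: nat
  assumes m: "m \<ge> 1" and d: "d \<ge> 1"
begin

abbreviation "FF \<equiv> F m d"
definition "aa n = (FF ^^ n) 0"
definition "ev n = aa (2*n)"
definition "od n = aa (2*n+1)"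

lemma aa_range: "0 \<le> aa n \<and> aa n \<le> 1"
  unfolding aa_def using Fiter_range[of 0] by simp

lemma od_ev: "od n = FF (ev n)" by (simp add: od_def ev_def aa_def)
lemma ev_Suc: "ev (Suc n) = FF (od n)" by (simp add: od_def ev_def aa_def)

lemma iter1: "(FF ^^ Suc n) 1 = aa n"
  by (simp add: aa_def funpow_Suc_right F_one[OF m d] del: funpow.simps)

lemma ev_r: "0 \<le> ev n \<and> ev n \<le> 1" by (simp add: ev_def aa_range)
lemma od_r: "0 \<le> od n \<and> od n \<le> 1" by (simp add: od_def aa_range)

lemma mono_eo: "ev n \<le> ev (Suc n) \<and> od (Suc n) \<le> od n"
proof (induction n)
  case 0
  have "ev 0 = 0" by (simp add: ev_def aa_def)
  moreover have "od 0 = 1/2" by (simp add: od_def aa_def F_zero[OF m])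
  moreover have "od 1 \<le> 1/2" using od_ev[of 1] F_range[of "ev 1" m d] ev_r[of 1] by simp
  ultimately show ?case using ev_r[of 1] by simp
next
  case (Suc n)
  have 1: "ev (Suc n) \<le> ev (Suc (Suc n))"
    unfolding ev_Suc using Suc F_anti[of "od (Suc n)" "od n" m d] od_r by auto
  have 2: "od (Suc (Suc n)) \<le> od (Suc n)"
    unfolding od_ev using 1 F_anti[of "ev (Suc n)" "ev (Suc (Suc n))" m d] ev_r by auto
  show ?case using 1 2 by simp
qed

lemma ev_le_od: "ev n \<le> od n"
proof (induction n)
  case 0 thus ?case by (simp add: ev_def od_def aa_def F_zero[OF m])
next
  case (Suc k)
  have "FF (od k) \<le> FF (ev k)"
    using F_anti[of "ev k" "od k" m d] ev_r od_r Suc by auto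
  hence a: "ev (Suc k) \<le> od k" by (simp add: ev_Suc od_ev)
  have "FF (od k) \<le> FF (ev (Suc k))"
    using F_anti[of "ev (Suc k)" "od k" m d] ev_r od_r a by auto
  thus ?case unfolding od_ev[of "Suc k"] ev_Suc[of k] .
qed

lemma not_cyc_conv:
  assumes nc: "\<not> Cyc m d"
  shows "(\<lambda>n. \<bar>aa (Suc n) - aa n\<bar>) \<longlonglongrightarrow> 0"
proof -
  have inc: "incseq ev" by (rule incseq_SucI) (use mono_eo in blast)
  have dec: "decseq od" by (rule decseq_SucI) (use mono_eo in blast)
  have be: "bdd_above (range ev)" using ev_r by (auto intro: bdd_aboveI[of _ 1])
  have bo: "bdd_below (range od)" using od_r by (auto intro: bdd_belowI[of _ 0])
  obtain L0 where L0: "ev \<longlonglongrightarrow> L0" using LIMSEQ_incseq_SUP[OF be inc] by blast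
  obtain L1 where L1: "od \<longlonglongrightarrow> L1" using LIMSEQ_decseq_INF[OF bo dec] by blast
  have L0r: "0 \<le> L0" "L0 \<le> 1"
    using LIMSEQ_le_const[OF L0, of 0] LIMSEQ_le_const2[OF L0, of 1] ev_r by auto
  have L1r: "0 \<le> L1" "L1 \<le> 1"
    using LIMSEQ_le_const[OF L1, of 0] LIMSEQ_le_const2[OF L1, of 1] od_r by auto
  have "(\<lambda>n. FF (ev n)) \<longlonglongrightarrow> FF L0" by (rule isCont_tendsto_compose[OF F_isCont[OF L0r] L0])
  hence e1: "L1 = FF L0" using L1 unfolding od_ev[symmetric] using LIMSEQ_unique by blast
  have "(\<lambda>n. FF (od n)) \<longlonglongrightarrow> FF L1" by (rule isCont_tendsto_compose[OF F_isCont[OF L1r] L1])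
  moreover have "(\<lambda>n. ev (Suc n)) \<longlonglongrightarrow> L0" using L0 by (rule LIMSEQ_Suc)
  ultimately have e2: "L0 = FF L1" unfolding ev_Suc using LIMSEQ_unique by blast
  have "L0 \<le> L1" using LIMSEQ_le[OF L0 L1] ev_le_od by blast
  moreover have "\<not> L0 < L1" using nc e1 e2 L0r L1r unfolding Cyc_def by force
  ultimately have eq: "L0 = L1" by simp
  define D where "D n = od n - ev n" for n
  have Dlim: "D \<longlonglongrightarrow> 0" unfolding D_def using tendsto_diff[OF L1 L0] eq by simp
  have Ddec: "D j \<le> D i" if "i \<le> j" for i j
    using inc dec that unfolding D_def incseq_def decseq_def by (smt (verit))
  have bnd: "\<bar>aa (Suc n) - aa n\<bar> \<le> D (n div 2)" for n
  proof (cases "even n")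
    case True
    then obtain j where j: "n = 2*j" by blast
    show ?thesis using ev_le_od[of j] unfolding j D_def ev_def od_def by simp
  next
    case False
    then obtain j where j: "n = 2*j+1" using oddE by blast
    have "aa (Suc n) = ev (Suc j)" "aa n = od j" unfolding j ev_def od_def by simp_all
    moreover have "ev (Suc j) \<le> od j" using ev_le_od[of "Suc j"] mono_eo[of j] by simp
    moreover have "ev j \<le> ev (Suc j)" using mono_eo[of j] by simp
    moreover have "n div 2 = j" using j by simp
    ultimately show ?thesis unfolding D_def by simp
  qed
  show ?thesis
  proof (rule LIMSEQ_I)
    fix r :: real assume r: "0 < r"
    obtain N where N: "\<forall>n\<ge>N. norm (D n - 0) < r" using LIMSEQ_D[OF Dlim r] by blast
    have "norm (\<bar>aa (Suc n) - aa n\<bar> - 0) < r" if "n \<ge> 2*N" for n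
    proof -
      have "N \<le> n div 2" using that by simp
      hence "D (n div 2) < r" using N by auto
      thus ?thesis using bnd[of n] by simp
    qed
    thus "\<exists>no. \<forall>n\<ge>no. norm (\<bar>aa (Suc n) - aa n\<bar> - 0) < r" by blast
  qed
qed

lemma cyc_bound:
  assumes c: "Cyc m d"
  obtains g where "g > 0" "\<And>n. \<bar>aa (Suc n) - aa n\<bar> \<ge> g"
proof -
  from c obtain x y where xy: "0 \<le> x" "x < y" "y \<le> 1" "y \<le> FF x" "FF y \<le> x"
    unfolding Cyc_def by blast
  have Q: "ev n \<le> x \<and> y \<le> od n" for n
  proof (induction n)
    case 0
    have "ev 0 \<le> x" using xy by (simp add: ev_def aa_def)
    moreover have "FF x \<le> od 0" unfolding od_ev using F_anti[of "ev 0" x m d] ev_r calculation xy by auto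
    ultimately show ?case using xy by simp
  next
    case (Suc n)
    have "ev (Suc n) \<le> FF y" unfolding ev_Suc using F_anti[of y "od n" m d] od_r Suc xy by auto
    hence e: "ev (Suc n) \<le> x" using xy by simp
    have "FF x \<le> od (Suc n)" unfolding od_ev using F_anti[of "ev (Suc n)" x m d] ev_r e xy by auto
    thus ?case using e xy by simp
  qed
  have "\<bar>aa (Suc n) - aa n\<bar> \<ge> y - x" for n
  proof (cases "even n")
    case True
    then obtain j where j: "n = 2*j" by blast
    show ?thesis using Q[of j] unfolding j ev_def od_def by (simp; arith)
  next
    case False
    then obtain j where j: "n = 2*j+1" using oddE by blast
    have "aa (Suc n) = ev (Suc j)" "aa n = od j" unfolding j ev_def od_def by simp_all
    thus ?thesis using Q[of j] Q[of "Suc j"] by (simp; arith)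
  qed
  thus ?thesis using that[of "y - x"] xy by simp
qed

end

lemma uniq_iff:
  assumes k: "k \<ge> 2" and D: "\<Delta> \<ge> 2"
  shows "uniqueness k \<Delta> \<longleftrightarrow> \<not> Cyc (k-1) (\<Delta>-1)"
proof -
  have m: "k-1 \<ge> 1" and d: "\<Delta>-1 \<ge> 1" using k D by auto
  have mi: "max_influence k \<Delta> (Suc n) = \<bar>aa (k-1) (\<Delta>-1) (Suc n) - aa (k-1) (\<Delta>-1) n\<bar>" for n
    unfolding max_infl[OF k] iter1[OF m d] aa_def[OF m d] by simp
  show ?thesis
  proof
    assume u: "uniqueness k \<Delta>"
    show "\<not> Cyc (k-1) (\<Delta>-1)"
    proof
      assume c: "Cyc (k-1) (\<Delta>-1)"
      obtain g where g: "g > 0" "\<And>n. \<bar>aa (k-1) (\<Delta>-1) (Suc n) - aa (k-1) (\<Delta>-1) n\<bar> \<ge> g"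
        using cyc_bound[OF m d c] by blast
      have "\<forall>\<^sub>F n in sequentially. ereal g \<le> ereal (max_influence k \<Delta> n)"
        unfolding eventually_sequentially
      proof (intro exI[of _ 1] allI impI)
        fix n :: nat assume "1 \<le> n"
        then obtain j where "n = Suc j" by (cases n) auto
        thus "ereal g \<le> ereal (max_influence k \<Delta> n)" using mi[of j] g(2)[of j] by simp
      qed
      hence "ereal g \<le> limsup (\<lambda>n. ereal (max_influence k \<Delta> n))"
        by (intro le_Limsup) auto
      thus False using u g unfolding uniqueness_def by simp
    qed
  next
    assume nc: "\<not> Cyc (k-1) (\<Delta>-1)"
    have "(\<lambda>n. max_influence k \<Delta> (Suc n)) \<longlonglongrightarrow> 0"
      unfolding mi using not_cyc_conv[OF m d nc] .
    hence "(\<lambda>n. max_influence k \<Delta> n) \<longlonglongrightarrow> 0" by (rule LIMSEQ_imp_Suc)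
    hence "(\<lambda>n. ereal (max_influence k \<Delta> n)) \<longlonglongrightarrow> ereal 0" by simp
    hence "limsup (\<lambda>n. ereal (max_influence k \<Delta> n)) = ereal 0"
      by (intro lim_imp_Limsup) auto
    thus "uniqueness k \<Delta>" unfolding uniqueness_def by (simp add: zero_ereal_def)
  qed
qed


lemma pow_diff_le:
  fixes x y :: real
  assumes "0 \<le> x" "x \<le> y" "y \<le> 1/2"
  shows "y^(Suc n) - x^(Suc n) \<le> y - x"
proof (induction n)
  case 0 thus ?case by simp
next
  case (Suc n)
  have e: "y^(Suc (Suc n)) - x^(Suc (Suc n)) = y * (y^(Suc n) - x^(Suc n)) + x^(Suc n) * (y - x)"
    by (simp add: algebra_simps)
  have x1: "x^(Suc n) \<le> 1/2"
  proof -
    have "x^(Suc n) \<le> x^1" using assms by (intro power_decreasing) auto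
    thus ?thesis using assms by simp
  qed
  have d0: "0 \<le> y^(Suc n) - x^(Suc n)" using power_mono[OF assms(2) assms(1), of "Suc n"] by linarith
  have A: "y * (y^(Suc n) - x^(Suc n)) \<le> (1/2) * (y - x)"
    using Suc d0 assms by (intro mult_mono) auto
  have B: "x^(Suc n) * (y - x) \<le> (1/2) * (y - x)"
    using x1 assms by (intro mult_right_mono) auto
  have "y * (y^(Suc n) - x^(Suc n)) + x^(Suc n) * (y - x) \<le> (1/2) * (y - x) + (1/2) * (y - x)"
    using A B by (rule add_mono)
  thus ?case unfolding e by simp
qed

lemma not_cyc_1:
  assumes m: "m \<ge> 1"
  shows "\<not> Cyc m 1"
proof
  assume "Cyc m 1"
  then obtain x y where xy: "0 \<le> x" "x < y" "y \<le> 1" "y \<le> F m 1 x" "F m 1 y \<le> x"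
    unfolding Cyc_def by blast
  have y2: "y \<le> 1/2" using xy(4) F_range[of x m 1] xy by linarith
  define u where "u = x^m"
  define v where "v = y^m"
  obtain n where n: "m = Suc n" using m by (cases m) auto
  have uv: "0 \<le> u" "u \<le> v" "v \<le> 1/2" "v - u \<le> y - x"
  proof -
    show "0 \<le> u" unfolding u_def using xy by simp
    show "u \<le> v" unfolding u_def v_def using xy by (simp add: power_mono)
    have "v \<le> y^1" unfolding v_def using xy m by (intro power_decreasing) auto
    thus "v \<le> 1/2" using y2 by simp
    show "v - u \<le> y - x" unfolding u_def v_def n using pow_diff_le[of x y n] xy y2 by simp
  qed
  have eq: "F m 1 x - F m 1 y = (v - u) / ((2-u)*(2-v))"
    using uv unfolding F_def u_def[symmetric] v_def[symmetric] by (simp add: field_simps)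
  have D: "(2-u)*(2-v) \<ge> 9/4"
  proof -
    have "(3/2)*(3/2) \<le> (2-u)*(2-v)" using uv by (intro mult_mono) auto
    thus ?thesis by simp
  qed
  have "(v - u) / ((2-u)*(2-v)) \<le> (v - u) / (9/4)"
    using D uv by (intro divide_left_mono) auto
  hence "F m 1 x - F m 1 y \<le> (4/9) * (y - x)" using eq uv by simp
  moreover have "y - x \<le> F m 1 x - F m 1 y" using xy by simp
  ultimately show False using xy by simp
qed

lemma exists_cyc:
  assumes m: "m \<ge> 1"
  shows "\<exists>d\<ge>2. Cyc m d"
proof -
  define c :: real where "c = 1 - (1/3)^m"
  have c0: "0 \<le> c" "c < 1" unfolding c_def using m by (auto simp: power_le_one)
  have "(\<lambda>n. of_nat n * c ^ n) \<longlonglongrightarrow> 0" by (rule powser_times_n_limit_0) (use c0 in simp)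
  then obtain N where N: "\<forall>n\<ge>N. norm (of_nat n * c ^ n - 0) < 1/2" using LIMSEQ_D[of _ 0 "1/2"] by force
  define d where "d = max N 2"
  have d2: "d \<ge> 2" unfolding d_def by simp
  have dc: "real d * c ^ d < 1/2" using N[rule_format, of d] c0 unfolding d_def by simp
  define x :: real where "x = 1/(2*real d)"
  define y :: real where "y = 1/3"
  have x0: "0 < x" "x \<le> 1/4" unfolding x_def using d2 by (auto simp: field_simps)
  have "y \<le> F m d x"
  proof -
    have "x^m \<le> x^1" using x0 m by (intro power_decreasing) auto
    hence "real d * x^m \<le> real d * x" by (intro mult_left_mono) auto
    also have "\<dots> = 1/2" unfolding x_def using d2 by simp
    finally have dx: "real d * x^m \<le> 1/2" .
    have "x^m \<le> 1" using x0 by (simp add: power_le_one)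
    hence "1 + real d * (- (x^m)) \<le> (1 + (- (x^m)))^d" by (intro Bernoulli_inequality) simp
    hence h: "1/2 \<le> (1 - x^m)^d" using dx by simp
    thus ?thesis unfolding F_def y_def by (simp add: field_simps)
  qed
  moreover have "F m d y \<le> x"
  proof -
    have h0: "0 \<le> (1 - y^m)^d" using h_range[of y m d] unfolding y_def by simp
    have "F m d y \<le> (1 - y^m)^d" unfolding F_def using h0 by (simp add: field_simps)
    also have "\<dots> = c^d" unfolding c_def y_def by (simp add: power_divide)
    also have "\<dots> \<le> x" unfolding x_def using dc d2 by (simp add: field_simps)
    finally show ?thesis .
  qed
  moreover have "x < y" using x0 unfolding y_def by simp
  ultimately have "Cyc m d" unfolding Cyc_def using x0 unfolding y_def
    by (intro exI[of _ x] exI[of _ "1/3"]) auto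
  thus ?thesis using d2 by blast
qed


definition LL :: "real \<Rightarrow> real" where "LL t = ln (1-t) - ln t"
definition BB :: "nat \<Rightarrow> real \<Rightarrow> real" where "BB m t = - ln (1 - t^m)"
definition psi :: "nat \<Rightarrow> real \<Rightarrow> real" where "psi m t = LL t * BB m t"
definition GG :: "nat \<Rightarrow> real \<Rightarrow> real" where
  "GG m t = real m * (1-t) * LL t - (1 - t^m) * BB m t / t^m"

lemma LL_deriv: "0 < t \<Longrightarrow> t < 1 \<Longrightarrow> (LL has_real_derivative (- 1/(t*(1-t)))) (at t)"
  unfolding LL_def
  by (rule derivative_eq_intros refl | simp)+ (simp add: field_simps)

lemma BB_deriv: "0 < t \<Longrightarrow> t < 1 \<Longrightarrow> (BB (Suc n) has_real_derivative (real (Suc n) * t^n / (1 - t^Suc n))) (at t)"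
proof -
  assume t: "0 < t" "t < 1"
  have u: "t^Suc n < 1" by (rule power_Suc_less_one[OF t])
  have p: "((\<lambda>t. t^Suc n) has_real_derivative real (Suc n) * t^n) (at t)"
    using DERIV_pow[of "Suc n" t] by simp
  have q: "((\<lambda>t. 1 - t^Suc n) has_real_derivative (- (real (Suc n) * t^n))) (at t)"
    using DERIV_diff[OF DERIV_const p] by simp
  have r: "((\<lambda>t. ln (1 - t^Suc n)) has_real_derivative (inverse (1 - t^Suc n) * (- (real (Suc n) * t^n)))) (at t)"
    by (rule DERIV_chain2[OF DERIV_ln q]) (use u in simp)
  have d: "((\<lambda>t. - ln (1 - t^Suc n)) has_real_derivative - (inverse (1 - t^Suc n) * (- (real (Suc n) * t^n)))) (at t)"
    by (rule DERIV_minus[OF r])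
  have e: "- (inverse (1 - t^Suc n) * (- (real (Suc n) * t^n))) = real (Suc n) * t^n / (1 - t^Suc n)"
    by (simp add: divide_inverse)
  show ?thesis unfolding BB_def[abs_def] using d unfolding e .
qed


lemma alg1:
  fixes t a X w B L c :: real
  assumes "t > 0" "a > 0" "X > 0" "w > 0"
  shows "(-1/(t*a)) * B + (c * X/w) * L = (t*X) * (c*a*L - w*B/(t*X)) / (t*a*w)"
  using assms by (simp add: field_simps)

lemma alg2:
  fixes t a X w B L c :: real
  assumes "t > 0" "a > 0" "X > 0" "w > 0" "w = 1 - t*X"
  shows "(0*a + (0-1)*c) * L + (-1/(t*a)) * (c*a) - (((0 - c*X) * B + (c*X/w) * w) * (t*X) - (w*B)*(c*X)) / ((t*X)*(t*X))
     = -c*L - (c/t)*(2 - B/(t*X))"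
proof -
  have h1: "(c*X/w) * w = c*X" using assms by simp
  have s: "t*X + w = 1" using assms(5) by simp
  have "((0 - c*X) * B + c*X) * (t*X) - (w*B)*(c*X) = c*X*(t*X - B*(t*X + w))"
    by (simp add: algebra_simps)
  hence e: "((0 - c*X) * B + (c*X/w) * w) * (t*X) - (w*B)*(c*X) = c*X*(t*X - B)"
    unfolding h1 s by simp
  show ?thesis unfolding e using assms(1-4) by (simp add: field_simps)
qed

lemma psi_deriv:
  assumes t: "0 < t" "t < 1"
  shows "(psi (Suc n) has_real_derivative (t^Suc n * GG (Suc n) t / (t*(1-t)*(1-t^Suc n)))) (at t)"
proof -
  have u: "t^Suc n < 1" by (rule power_Suc_less_one[OF t])
  have e: "(-1/(t*(1-t))) * BB (Suc n) t + (real (Suc n) * t^n / (1 - t^Suc n)) * LL t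
     = t^Suc n * GG (Suc n) t / (t*(1-t)*(1-t^Suc n))"
    using alg1[of t "1-t" "t^n" "1 - t^Suc n" "BB (Suc n) t" "real (Suc n)" "LL t"] t u
    unfolding GG_def power_Suc by simp
  show ?thesis unfolding psi_def[abs_def]
    by (rule DERIV_cong[OF DERIV_mult[OF LL_deriv[OF t] BB_deriv[OF t]] e])
qed

lemma GG_deriv:
  assumes t: "0 < t" "t < 1"
  shows "(GG (Suc n) has_real_derivative (- real (Suc n) * LL t - (real (Suc n)/t) * (2 - BB (Suc n) t / t^Suc n))) (at t)"
proof -
  have u: "t^Suc n < 1" by (rule power_Suc_less_one[OF t])
  have tn: "t^n > 0" using t by simp
  have p: "((\<lambda>t. t^Suc n) has_real_derivative real (Suc n) * t^n) (at t)"
    using DERIV_pow[of "Suc n" t] by simp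
  have d1: "((\<lambda>x. real (Suc n) * (1-x)) has_real_derivative 0 * (1 - t) + (0-1) * real (Suc n)) (at t)"
    by (rule DERIV_mult[OF DERIV_const DERIV_diff[OF DERIV_const DERIV_ident]])
  note d2 = DERIV_mult[OF d1 LL_deriv[OF t]]
  have d3: "((\<lambda>x. 1 - x^Suc n) has_real_derivative 0 - real (Suc n) * t^n) (at t)"
    by (rule DERIV_diff[OF DERIV_const p])
  note d4 = DERIV_mult[OF d3 BB_deriv[OF t]]
  have nz: "t^Suc n \<noteq> 0" using t by simp
  note d5 = DERIV_divide[OF d4 p nz]
  note d6 = DERIV_diff[OF d2 d5]
  have w: "1 - t^Suc n > 0" using u by simp
  have e: "(0 * (1 - t) + (0-1) * real (Suc n)) * LL t + (-1/(t*(1-t))) * (real (Suc n) * (1-t))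
       - (((0 - real (Suc n) * t^n) * BB (Suc n) t + (real (Suc n) * t^n / (1 - t^Suc n)) * (1 - t^Suc n)) * t^Suc n
          - ((1 - t^Suc n) * BB (Suc n) t) * (real (Suc n) * t^n)) / (t^Suc n * t^Suc n)
       = - real (Suc n) * LL t - (real (Suc n)/t) * (2 - BB (Suc n) t / t^Suc n)"
    using alg2[of t "1-t" "t^n" "1 - t^Suc n" "real (Suc n)" "LL t" "BB (Suc n) t"] t tn w
    unfolding power_Suc by simp
  show ?thesis unfolding GG_def[abs_def]
    by (rule DERIV_cong[OF d6 e])
qed


lemma LL_pos: "0 < t \<Longrightarrow> t < 1/2 \<Longrightarrow> LL t > 0"
  unfolding LL_def by (simp add: ln_less_cancel_iff)

lemma BB_bound: "0 < t \<Longrightarrow> t < 1/2 \<Longrightarrow> BB (Suc n) t \<le> 2 * t^Suc n"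
proof -
  assume t: "0 < t" "t < 1/2"
  define u where "u = t^Suc n"
  have u0: "0 \<le> u" unfolding u_def using t by simp
  have "u \<le> t^1" unfolding u_def using t by (intro power_decreasing) auto
  hence u2: "u \<le> 1/2" using t by simp
  have "- u - 2 * u^2 \<le> ln (1 - u)" by (rule ln_one_minus_pos_lower_bound[OF u0 u2])
  moreover have "2 * u^2 \<le> u"
  proof -
    have "u * (2*u) \<le> u * 1" using u0 u2 by (intro mult_left_mono) auto
    thus ?thesis by (simp add: power2_eq_square)
  qed
  ultimately show ?thesis unfolding BB_def u_def[symmetric] by simp
qed

lemma GG'_neg:
  assumes t: "0 < t" "t < 1/2"
  shows "- real (Suc n) * LL t - (real (Suc n)/t) * (2 - BB (Suc n) t / t^Suc n) < 0"
proof -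
  have "BB (Suc n) t / t^Suc n \<le> 2" using BB_bound[OF t] t by (simp add: divide_le_eq)
  hence "0 \<le> (real (Suc n)/t) * (2 - BB (Suc n) t / t^Suc n)" using t by simp
  moreover have "0 < real (Suc n) * LL t" using LL_pos[OF t] by simp
  moreover have "- real (Suc n) * LL t = - (real (Suc n) * LL t)" by (rule mult_minus_left)
  ultimately show ?thesis by linarith
qed

lemma GG_decr:
  assumes "0 < a" "a < b" "b < 1/2"
  shows "GG (Suc n) b < GG (Suc n) a"
proof -
  obtain z where z: "a < z" "z < b" "GG (Suc n) b - GG (Suc n) a = (b - a) *
     (- real (Suc n) * LL z - (real (Suc n)/z) * (2 - BB (Suc n) z / z^Suc n))"
    using MVT2[OF assms(2), of "GG (Suc n)" "\<lambda>t. - real (Suc n) * LL t - (real (Suc n)/t) * (2 - BB (Suc n) t / t^Suc n)"]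
      GG_deriv assms by fastforce
  have "(- real (Suc n) * LL z - (real (Suc n)/z) * (2 - BB (Suc n) z / z^Suc n)) < 0"
    using GG'_neg[of z] z assms by simp
  hence "(b - a) * (- real (Suc n) * LL z - (real (Suc n)/z) * (2 - BB (Suc n) z / z^Suc n)) < 0"
    using assms by (simp add: mult_pos_neg)
  thus ?thesis using z by simp
qed

lemma psi_factor_pos: "0 < (t::real) \<Longrightarrow> t < 1 \<Longrightarrow> t^Suc n / (t*(1-t)*(1-t^Suc n)) > 0"
proof -
  assume t: "0 < t" "t < 1"
  have "t^Suc n < 1" by (rule power_Suc_less_one[OF t])
  thus ?thesis using t by (intro divide_pos_pos mult_pos_pos) auto
qed

lemma psi_mvt:
  assumes "0 < a" "a < b" "b < 1"
  obtains z where "a < z" "z < b" "psi (Suc n) b - psi (Suc n) a = (b - a) * (z^Suc n * GG (Suc n) z / (z*(1-z)*(1-z^Suc n)))"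
  using MVT2[OF assms(2), of "psi (Suc n)" "\<lambda>t. t^Suc n * GG (Suc n) t / (t*(1-t)*(1-t^Suc n))"]
    psi_deriv assms by fastforce

lemma unimodal:
  assumes "0 < x1" "x1 \<le> x0" "x0 < y" "y < 1/2" "psi (Suc n) x0 \<le> psi (Suc n) y"
  shows "psi (Suc n) x1 \<le> psi (Suc n) x0"
proof -
  have G0: "GG (Suc n) x0 > 0"
  proof (rule ccontr)
    assume "\<not> ?thesis"
    hence g: "GG (Suc n) x0 \<le> 0" by simp
    obtain z where z: "x0 < z" "z < y" "psi (Suc n) y - psi (Suc n) x0 = (y - x0) * (z^Suc n * GG (Suc n) z / (z*(1-z)*(1-z^Suc n)))"
      using psi_mvt[of x0 y n] assms by auto
    have "GG (Suc n) z < GG (Suc n) x0" using GG_decr[of x0 z n] z assms by simp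
    hence gz: "GG (Suc n) z < 0" using g by simp
    have fp: "z^Suc n / (z*(1-z)*(1-z^Suc n)) > 0" using psi_factor_pos[of z n] z assms by simp
    have "z^Suc n * GG (Suc n) z / (z*(1-z)*(1-z^Suc n)) = (z^Suc n / (z*(1-z)*(1-z^Suc n))) * GG (Suc n) z"
      by simp
    hence Q: "z^Suc n * GG (Suc n) z / (z*(1-z)*(1-z^Suc n)) < 0" using fp gz by (simp add: mult_pos_neg)
    have "(y - x0) * (z^Suc n * GG (Suc n) z / (z*(1-z)*(1-z^Suc n))) < 0"
      by (rule mult_pos_neg) (use assms Q in auto)
    hence "psi (Suc n) y - psi (Suc n) x0 < 0" using z(3) by linarith
    thus False using assms by simp
  qed
  show ?thesis
  proof (cases "x1 = x0")
    case True thus ?thesis by simp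
  next
    case False
    hence lt: "x1 < x0" using assms by simp
    obtain z where z: "x1 < z" "z < x0" "psi (Suc n) x0 - psi (Suc n) x1 = (x0 - x1) * (z^Suc n * GG (Suc n) z / (z*(1-z)*(1-z^Suc n)))"
      using psi_mvt[of x1 x0 n] assms lt by auto
    have "GG (Suc n) x0 < GG (Suc n) z" using GG_decr[of z x0 n] z assms by simp
    hence gz: "GG (Suc n) z > 0" using G0 by simp
    have fp: "z^Suc n / (z*(1-z)*(1-z^Suc n)) > 0" using psi_factor_pos[of z n] z assms by simp
    have "z^Suc n * GG (Suc n) z / (z*(1-z)*(1-z^Suc n)) = (z^Suc n / (z*(1-z)*(1-z^Suc n))) * GG (Suc n) z"
      by simp
    hence Q: "z^Suc n * GG (Suc n) z / (z*(1-z)*(1-z^Suc n)) > 0" using fp gz by simp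
    have "(x0 - x1) * (z^Suc n * GG (Suc n) z / (z*(1-z)*(1-z^Suc n))) > 0"
      by (rule mult_pos_pos) (use lt Q in auto)
    hence "psi (Suc n) x0 - psi (Suc n) x1 > 0" using z(3) by linarith
    thus ?thesis by simp
  qed
qed


lemma conv_ge:
  assumes t: "0 < t" "t < 1" and s: "0 < s" "s < 1"
  shows "(s \<le> F (Suc n) d t) \<longleftrightarrow> real d * BB (Suc n) t \<le> LL s"
proof -
  have u: "t^Suc n < 1" by (rule power_Suc_less_one[OF t])
  define q where "q = 1 - t^Suc n"
  have q0: "q > 0" unfolding q_def using u by simp
  define h where "h = q^d"
  have h0: "h > 0" unfolding h_def using q0 by simp
  have "s \<le> F (Suc n) d t \<longleftrightarrow> s \<le> h/(1+h)" unfolding F_def h_def q_def by simp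
  also have "\<dots> \<longleftrightarrow> s*(1+h) \<le> h" using h0 by (simp add: le_divide_eq)
  also have "\<dots> \<longleftrightarrow> s \<le> h*(1-s)" by (simp add: algebra_simps)
  also have "\<dots> \<longleftrightarrow> s/(1-s) \<le> h" using s by (simp add: divide_le_eq mult.commute)
  also have "\<dots> \<longleftrightarrow> ln (s/(1-s)) \<le> ln h" using s h0 by (simp add: ln_le_cancel_iff)
  also have "ln (s/(1-s)) = ln s - ln (1-s)" using s by (simp add: ln_div)
  also have "ln h = real d * ln q" unfolding h_def using q0 by (simp add: ln_realpow)
  finally show ?thesis unfolding BB_def LL_def q_def by (simp add: algebra_simps)
qed

lemma conv_le:
  assumes t: "0 < t" "t < 1" and s: "0 < s" "s < 1"
  shows "(F (Suc n) d t \<le> s) \<longleftrightarrow> LL s \<le> real d * BB (Suc n) t"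
proof -
  have u: "t^Suc n < 1" by (rule power_Suc_less_one[OF t])
  define q where "q = 1 - t^Suc n"
  have q0: "q > 0" unfolding q_def using u by simp
  define h where "h = q^d"
  have h0: "h > 0" unfolding h_def using q0 by simp
  have "F (Suc n) d t \<le> s \<longleftrightarrow> h/(1+h) \<le> s" unfolding F_def h_def q_def by simp
  also have "\<dots> \<longleftrightarrow> h \<le> s*(1+h)" using h0 by (simp add: divide_le_eq)
  also have "\<dots> \<longleftrightarrow> h*(1-s) \<le> s" by (simp add: algebra_simps)
  also have "\<dots> \<longleftrightarrow> h \<le> s/(1-s)" using s by (simp add: le_divide_eq)
  also have "\<dots> \<longleftrightarrow> ln h \<le> ln (s/(1-s))" using s h0 by (simp add: ln_le_cancel_iff)
  also have "ln (s/(1-s)) = ln s - ln (1-s)" using s by (simp add: ln_div)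
  also have "ln h = real d * ln q" unfolding h_def using q0 by (simp add: ln_realpow)
  finally show ?thesis unfolding BB_def LL_def q_def by (simp add: algebra_simps)
qed

lemma BB_pos: "0 < t \<Longrightarrow> t < 1 \<Longrightarrow> BB (Suc n) t > 0"
proof -
  assume t: "0 < t" "t < 1"
  have u: "t^Suc n < 1" by (rule power_Suc_less_one[OF t])
  have "0 < t^Suc n" using t by simp
  hence "1 - t^Suc n < 1" "0 < 1 - t^Suc n" using u by auto
  thus ?thesis unfolding BB_def by simp
qed

lemma F_mono_d: "d \<le> d' \<Longrightarrow> 0 \<le> t \<Longrightarrow> t \<le> 1 \<Longrightarrow> F m d' t \<le> F m d t"
proof -
  assume a: "d \<le> d'" "0 \<le> t" "t \<le> 1"
  have q: "0 \<le> 1 - t^m" "1 - t^m \<le> 1" using a by (auto simp: power_le_one)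
  have h1: "(1 - t^m)^d' \<le> (1 - t^m)^d" by (rule power_decreasing[OF a(1) q])
  have h0: "0 \<le> (1 - t^m)^d'" using q by simp
  show ?thesis unfolding F_def by (rule xf_mono[OF h0 h1])
qed

lemma cyc_up:
  assumes c: "Cyc (Suc n) d" and d1: "1 \<le> d" and dd: "d \<le> d'"
  shows "Cyc (Suc n) d'"
proof -
  from c obtain x0 y where xy: "0 \<le> x0" "x0 < y" "y \<le> 1" "y \<le> F (Suc n) d x0" "F (Suc n) d y \<le> x0"
    unfolding Cyc_def by blast
  have y2: "y \<le> 1/2" using xy F_range[of x0 "Suc n" d] by linarith
  have Fy: "F (Suc n) d y > 0"
  proof -
    have "y^Suc n < 1" using y2 xy by (intro power_Suc_less_one) auto
    hence "(1 - y^Suc n)^d > 0" by simp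
    thus ?thesis unfolding F_def by (simp add: add_pos_pos)
  qed
  have x0p: "0 < x0" using Fy xy by simp
  have y2': "y < 1/2"
  proof -
    have "0 < x0^Suc n" using x0p by simp
    moreover have "x0^Suc n < 1" using x0p xy y2 by (intro power_Suc_less_one) auto
    ultimately have b: "0 < 1 - x0^Suc n" "1 - x0^Suc n < 1" by auto
    obtain e where e: "d = Suc e" using d1 by (cases d) auto
    have hl: "(1 - x0^Suc n)^d < 1" unfolding e by (rule power_Suc_less_one[OF b])
    have hp: "0 \<le> (1 - x0^Suc n)^d" using b by simp
    have gen: "\<And>hh::real. 0 \<le> hh \<Longrightarrow> hh < 1 \<Longrightarrow> hh/(1+hh) < 1/2"
      by (simp add: divide_less_eq)
    have "F (Suc n) d x0 < 1/2" unfolding F_def by (rule gen[OF hp hl])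
    thus ?thesis using xy by simp
  qed
  have yp: "0 < y" "y < 1" using x0p xy y2' by auto
  have x0r: "0 < x0" "x0 < 1" using x0p xy y2' by auto
  show ?thesis
  proof (cases "y \<le> F (Suc n) d' x0")
    case True
    have "F (Suc n) d' y \<le> F (Suc n) d y" using F_mono_d[OF dd] yp by simp
    thus ?thesis unfolding Cyc_def using True xy by (intro exI[of _ x0] exI[of _ y]) auto
  next
    case False
    have "\<exists>x. 0 \<le> x \<and> x \<le> x0 \<and> F (Suc n) d' x = y"
    proof (rule IVT2')
      show "F (Suc n) d' x0 \<le> y" using False by simp
      show "y \<le> F (Suc n) d' 0" using F_zero[of "Suc n" d'] y2 by simp
      show "0 \<le> x0" using xy by simp
      show "continuous_on {0..x0} (F (Suc n) d')"
        by (rule continuous_on_subset[OF F_cont_on]) (use xy y2 in auto)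
    qed
    then obtain x1 where x1: "0 \<le> x1" "x1 \<le> x0" "F (Suc n) d' x1 = y" by blast
    have x1p: "0 < x1"
    proof (rule ccontr)
      assume "\<not> ?thesis"
      hence "x1 = 0" using x1 by simp
      hence "y = 1/2" using x1 F_zero[of "Suc n" d'] by simp
      thus False using y2' by simp
    qed
    have x1r: "0 < x1" "x1 < 1" using x1p x1 x0r by auto
    have eq1: "real d' * BB (Suc n) x1 \<le> LL y" using conv_ge[OF x1r yp, of n d'] x1 by simp
    have eq2: "LL y \<le> real d' * BB (Suc n) x1" using conv_le[OF x1r yp, of n d'] x1 by simp
    have c1: "real d * BB (Suc n) x0 \<le> LL y" using conv_ge[OF x0r yp, of n d] xy by simp
    have c2: "LL x0 \<le> real d * BB (Suc n) y" using conv_le[OF yp x0r, of n d] xy by simp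
    have B0: "BB (Suc n) x0 > 0" "BB (Suc n) y > 0" "BB (Suc n) x1 > 0"
      using BB_pos x0r yp x1r by auto
    have "psi (Suc n) x0 = LL x0 * BB (Suc n) x0" by (simp add: psi_def)
    also have "\<dots> \<le> (real d * BB (Suc n) y) * BB (Suc n) x0"
      using c2 B0 by (intro mult_right_mono) auto
    also have "\<dots> = BB (Suc n) y * (real d * BB (Suc n) x0)" by simp
    also have "\<dots> \<le> BB (Suc n) y * LL y" using c1 B0 by (intro mult_left_mono) auto
    also have "\<dots> = psi (Suc n) y" by (simp add: psi_def)
    finally have p0: "psi (Suc n) x0 \<le> psi (Suc n) y" .
    have p1: "psi (Suc n) x1 \<le> psi (Suc n) x0"
      by (rule unimodal[OF x1p x1(2) xy(2) y2' p0])
    have "LL x1 * BB (Suc n) x1 \<le> (real d' * BB (Suc n) y) * BB (Suc n) x1"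
    proof -
      have "LL x1 * BB (Suc n) x1 \<le> LL y * BB (Suc n) y" using p1 p0 unfolding psi_def by simp
      also have "\<dots> = (real d' * BB (Suc n) x1) * BB (Suc n) y" using eq1 eq2 by simp
      also have "\<dots> = (real d' * BB (Suc n) y) * BB (Suc n) x1" by simp
      finally show ?thesis .
    qed
    hence "LL x1 \<le> real d' * BB (Suc n) y" using B0(3) by (simp add: mult_le_cancel_right)
    hence "F (Suc n) d' y \<le> x1" using conv_le[OF yp x1r, of n d'] by simp
    thus ?thesis unfolding Cyc_def using x1 x1p xy
      by (intro exI[of _ x1] exI[of _ y]) auto
  qed
qed


theorem lemma58:
  fixes k :: nat
  assumes "k \<ge> 2"
  shows "\<exists>\<Delta>c :: real. \<Delta>c \<ge> 3 \<and>
    (\<forall>\<Delta> :: nat. \<Delta> \<ge> 2 \<longrightarrow>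
       (real \<Delta> < \<Delta>c \<longrightarrow> uniqueness k \<Delta>) \<and>
       (real \<Delta> > \<Delta>c \<longrightarrow> \<not> uniqueness k \<Delta>))"
proof -
  have k: "k \<ge> 2" by fact
  obtain n where n: "k - 1 = Suc n" using k by (cases "k - 1") auto
  have m1: "k - 1 \<ge> 1" using k by simp
  define P where "P \<Delta> \<longleftrightarrow> 2 \<le> \<Delta> \<and> \<not> uniqueness k \<Delta>" for \<Delta>
  obtain d0 where d0: "d0 \<ge> 2" "Cyc (k-1) d0" using exists_cyc[OF m1] by blast
  have "P (d0 + 1)" unfolding P_def using uniq_iff[OF k, of "d0+1"] d0 by simp
  hence PL: "P (LEAST \<Delta>. P \<Delta>)" by (rule LeastI)
  define M where "M = (LEAST \<Delta>. P \<Delta>)"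
  have PM: "P M" using PL unfolding M_def .
  have u2: "uniqueness k 2" using uniq_iff[OF k, of 2] not_cyc_1[OF m1] by simp
  have M3: "M \<ge> 3" using PM u2 unfolding P_def by (cases "M = 2") auto
  have cM: "Cyc (k-1) (M - 1)" using PM uniq_iff[OF k, of M] unfolding P_def by simp
  show ?thesis
  proof (intro exI[of _ "real M"] conjI allI impI)
    show "3 \<le> real M" using M3 by simp
  next
    fix \<Delta> :: nat assume D: "2 \<le> \<Delta>" "real \<Delta> < real M"
    hence "\<not> P \<Delta>" unfolding M_def using not_less_Least by simp
    thus "uniqueness k \<Delta>" using D unfolding P_def by simp
  next
    fix \<Delta> :: nat assume D: "2 \<le> \<Delta>" "real M < real \<Delta>"
    have "Cyc (Suc n) (\<Delta> - 1)"
      by (rule cyc_up[of n "M - 1"]) (use cM n M3 D in auto)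
    thus "\<not> uniqueness k \<Delta>" using uniq_iff[OF k D(1)] n by simp
  qed
qed


end
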